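(* Let $\mathcal L$ be a finite atomic lattice with atoms $A_1,\dots,A_n$ and $\mathcal G$ a building set in $\mathcal L$. The toric variety $X_{\Sigma(\mathcal L,\mathcal G)}$ associated with the fan $\Sigma(\mathcal L,\mathcal G)=\{V(\mathcal S):\mathcal S\text{ nested in }\mathcal G\}$ can be constructed as follows: start from $\mathbb C^n$, the toric variety of the cone spanned by the standard basis of $\mathbb Z^n$, stratified by torus orbits; perform successively the blowups along the torus orbit closures associated with the faces $V(\lfloor G\rfloor)$ of the standard cone, for $G\in\mathcal G$ taken in a linear order $\succ$ such that $G\le G'$ in $\mathcal L$ implies $G'\succeq G$ (i.e. larger elements first); finally remove from the resulting variety all open torus orbits corresponding to cones $V(\mathcal T)$ of the resulting fan whose index set $\mathcal T\subseteq\mathcal G$ is not nested.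
   Context: A lattice is a finite poset in which every subset has a join $\vee$ and a meet; $\hat0$ is its least element; atomic means every element is a join of atoms. For $X\le Y$ write $[X,Y]=\{Z:X\le Z\le Y\}$ and $\mathcal G_{\le X}=\{G\in\mathcal G:G\le X\}$. A subset $\mathcal G\subseteq\mathcal L\setminus\{\hat0\}$ is a building set if for every $X\ne\hat0$, with $\{G_1,\dots,G_k\}$ the maximal elements of $\mathcal G_{\le X}$, there is a poset isomorphism $\prod_{i=1}^k[\hat0,G_i]\to[\hat0,X]$ sending $(\hat0,\dots,G_i,\dots,\hat0)$ to $G_i$. A subset $\mathcal S\subseteq\mathcal G$ is nested if for every set of pairwise incomparable $G_1,\dots,G_t\in\mathcal S$, $t\ge2$, $G_1\vee\dots\vee G_t\notin\mathcal G$. For $X\in\mathcal L$, $\lfloor X\rfloor$ is the set of atoms below $X$, $v_X\in\mathbb R^n$ has $i$-th coordinate $1$ if $A_i\le X$ and $0$ otherwise, and $V(\mathcal S)$ is the cone spanned by $\{v_X:X\in\mathcal S\}$. The blowup along the orbit closure of $V(\lfloor G\rfloor)$ is the toric blowup corresponding to the barycentric stellar subdivision of the fan at that cone, introducing the ray spanned by $v_G$. *)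

theory Defs
  imports Complex_Main "HOL-Library.FuncSet"
begin

text \<open>Finite lattices: a finite type of class complete_lattice.
  Vectors in R^n are represented as functions 'a => real supported on the atoms
  (coordinate i corresponds to atom A_i).\<close>

definition is_atom :: "'a::{finite,complete_lattice} \<Rightarrow> bool" where
  "is_atom A \<longleftrightarrow> A \<noteq> bot \<and> (\<forall>x. x \<le> A \<longrightarrow> x = bot \<or> x = A)"

definition atomic_lattice :: "'a::{finite,complete_lattice} itself \<Rightarrow> bool" where
  "atomic_lattice _ \<longleftrightarrow> (\<forall>X::'a. X = Sup {A. is_atom A \<and> A \<le> X})"

definition maximal_below :: "'a::{finite,complete_lattice} set \<Rightarrow> 'a \<Rightarrow> 'a set" where
  "maximal_below \<G> X = {G \<in> \<G>. G \<le> X \<and> \<not> (\<exists>H\<in>\<G>. H \<le> X \<and> G < H)}"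

definition building_set :: "'a::{finite,complete_lattice} set \<Rightarrow> bool" where
  "building_set \<G> \<longleftrightarrow> \<G> \<subseteq> UNIV - {bot} \<and>
     (\<forall>X. X \<noteq> bot \<longrightarrow>
        (let M = maximal_below \<G> X in
         \<exists>\<phi>. bij_betw \<phi> (PiE M (\<lambda>G. {bot..G})) {bot..X} \<and>
             (\<forall>f\<in>PiE M (\<lambda>G. {bot..G}). \<forall>g\<in>PiE M (\<lambda>G. {bot..G}).
                 (\<forall>G\<in>M. f G \<le> g G) \<longleftrightarrow> \<phi> f \<le> \<phi> g) \<and>
             (\<forall>G\<in>M. \<phi> (\<lambda>H\<in>M. if H = G then G else bot) = G)))"

definition nested :: "'a::{finite,complete_lattice} set \<Rightarrow> 'a set \<Rightarrow> bool" where
  "nested \<G> S \<longleftrightarrow> S \<subseteq> \<G> \<and>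
     (\<forall>H \<subseteq> S. 2 \<le> card H \<longrightarrow> (\<forall>x\<in>H. \<forall>y\<in>H. x \<noteq> y \<longrightarrow> \<not> x \<le> y) \<longrightarrow> Sup H \<notin> \<G>)"

definition vvec :: "'a::{finite,complete_lattice} \<Rightarrow> 'a \<Rightarrow> real" where
  "vvec X = (\<lambda>A. if is_atom A \<and> A \<le> X then 1 else 0)"

definition cone_span :: "('a \<Rightarrow> real) set \<Rightarrow> ('a \<Rightarrow> real) set" where
  "cone_span R = {(\<lambda>i. \<Sum>x\<in>R. c x * x i) | c. \<forall>x\<in>R. 0 \<le> c x}"

definition V_cone :: "'a::{finite,complete_lattice} set \<Rightarrow> ('a \<Rightarrow> real) set" where
  "V_cone S = cone_span (vvec ` S)"

definition floor_atoms :: "'a::{finite,complete_lattice} \<Rightarrow> 'a set" where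
  "floor_atoms X = {A. is_atom A \<and> A \<le> X}"

definition nested_fan :: "'a::{finite,complete_lattice} set \<Rightarrow> ('a \<Rightarrow> real) set set" where
  "nested_fan \<G> = {V_cone S | S. nested \<G> S}"

text \<open>Simplicial fans are represented by the sets of ray generators of their cones.
  Barycentric stellar subdivision at the cone generated by sigma: new ray spanned by
  the sum of the generators of sigma; cones containing sigma are removed and the
  cones tau + ray are added for tau in the closed star of sigma not containing sigma.\<close>
definition stellar :: "('a \<Rightarrow> real) set set \<Rightarrow> ('a \<Rightarrow> real) set \<Rightarrow> ('a \<Rightarrow> real) set set" where
  "stellar F \<sigma> = {\<tau> \<in> F. \<not> \<sigma> \<subseteq> \<tau>} \<union>
     {insert (\<lambda>i. \<Sum>x\<in>\<sigma>. x i) \<tau> | \<tau>. \<tau> \<union> \<sigma> \<in> F \<and> \<not> \<sigma> \<subseteq> \<tau>}"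

definition standard_fan :: "'a::{finite,complete_lattice} itself \<Rightarrow> ('a \<Rightarrow> real) set set" where
  "standard_fan _ = Pow (vvec ` {A::'a. is_atom A})"

definition blown_up_fan :: "'a::{finite,complete_lattice} list \<Rightarrow> ('a \<Rightarrow> real) set set" where
  "blown_up_fan Gs = foldl (\<lambda>F G. stellar F (vvec ` floor_atoms G)) (standard_fan TYPE('a)) Gs"

definition pruned_fan :: "'a::{finite,complete_lattice} set \<Rightarrow> 'a list \<Rightarrow> ('a \<Rightarrow> real) set set" where
  "pruned_fan \<G> Gs = {R \<in> blown_up_fan Gs. nested \<G> {G \<in> \<G>. vvec G \<in> R}}"

end

theory Submission imports Defs begin

lemma atom_nonbot: "is_atom a \<Longrightarrow> a \<noteq> bot"
  by (simp add: is_atom_def)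

lemma atomic_eq: "atomic_lattice TYPE('a::{finite,complete_lattice}) \<Longrightarrow> (X::'a) = Sup (floor_atoms X)"
  unfolding atomic_lattice_def floor_atoms_def by blast

lemma exists_atom:
  assumes "atomic_lattice TYPE('a::{finite,complete_lattice})" "(X::'a) \<noteq> bot"
  shows "\<exists>a. is_atom a \<and> a \<le> X"
proof (rule ccontr)
  assume "\<not> ?thesis"
  then have "floor_atoms X = {}" by (auto simp: floor_atoms_def)
  then show False using atomic_eq[OF assms(1), of X] assms(2) by simp
qed

lemma vvec_inj:
  assumes "atomic_lattice TYPE('a::{finite,complete_lattice})" "vvec (X::'a) = vvec Y"
  shows "X = Y"
proof -
  have "floor_atoms X = floor_atoms Y"
  proof (auto simp: floor_atoms_def)
    fix A assume "is_atom A" "A \<le> X"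
    then have "vvec X A = 1" by (simp add: vvec_def)
    then have "vvec Y A = 1" using assms(2) by simp
    then show "A \<le> Y" by (simp add: vvec_def split: if_splits)
  next
    fix A assume "is_atom A" "A \<le> Y"
    then have "vvec Y A = 1" by (simp add: vvec_def)
    then have "vvec X A = 1" using assms(2) by simp
    then show "A \<le> X" by (simp add: vvec_def split: if_splits)
  qed
  then show ?thesis using atomic_eq[OF assms(1), of X] atomic_eq[OF assms(1), of Y] by simp
qed

lemma vvec_atom: "is_atom a \<Longrightarrow> vvec a = (\<lambda>i. if i = a then 1 else 0)"
  unfolding vvec_def is_atom_def by (rule ext) auto

lemma sum_vvec:
  assumes "atomic_lattice TYPE('a::{finite,complete_lattice})"
  shows "(\<lambda>i. \<Sum>x\<in>vvec ` floor_atoms (G::'a). x i) = vvec G"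
proof
  fix i
  have inj: "inj_on vvec (floor_atoms G)" using vvec_inj[OF assms] by (meson inj_onI)
  have "(\<Sum>x\<in>vvec ` floor_atoms G. x i) = (\<Sum>a\<in>floor_atoms G. vvec a i)"
    using sum.reindex[OF inj, of "\<lambda>x. x i"] by simp
  also have "\<dots> = (\<Sum>a\<in>floor_atoms G. if i = a then 1 else 0)"
    by (rule sum.cong) (auto simp: floor_atoms_def vvec_atom)
  also have "\<dots> = (if i \<in> floor_atoms G then 1 else 0)" by simp
  also have "\<dots> = vvec G i" by (simp add: floor_atoms_def vvec_def)
  finally show "(\<Sum>x\<in>vvec ` floor_atoms G. x i) = vvec G i" .
qed

lemma atoms_in_G:
  assumes "building_set \<G>" "is_atom (a::'a::{finite,complete_lattice})"
  shows "a \<in> \<G>"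
proof (rule ccontr)
  assume na: "a \<notin> \<G>"
  have sub: "\<G> \<subseteq> UNIV - {bot}" using assms(1) by (simp add: building_set_def)
  have M: "maximal_below \<G> a = {}"
  proof -
    { fix G assume "G \<in> \<G>" "G \<le> a"
      then have "G = bot \<or> G = a" using assms(2) by (simp add: is_atom_def)
      with \<open>G \<in> \<G>\<close> na sub have False by auto }
    then show ?thesis by (auto simp: maximal_below_def)
  qed
  from assms(1) atom_nonbot[OF assms(2)] obtain \<phi> where
    "bij_betw \<phi> (PiE (maximal_below \<G> a) (\<lambda>G. {bot..G})) {bot..a}"
    unfolding building_set_def Let_def by blast
  then have "bij_betw \<phi> {\<lambda>x. undefined} {bot..a}" using M by simp
  then have "{bot..a} = {\<phi> (\<lambda>x. undefined)}" by (simp add: bij_betw_def)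
  moreover have "bot \<in> {bot..a}" "a \<in> {bot..a}" by auto
  ultimately show False using atom_nonbot[OF assms(2)] by auto
qed

lemma below_maximal:
  assumes "Y \<in> \<G>" "Y \<le> (X::'a::{finite,complete_lattice})"
  shows "\<exists>m\<in>maximal_below \<G> X. Y \<le> m"
proof -
  obtain m where m: "m \<in> {Z\<in>\<G>. Z \<le> X}" "Y \<le> m" "\<forall>b\<in>{Z\<in>\<G>. Z \<le> X}. m \<le> b \<longrightarrow> m = b"
    using finite_has_maximal2[of "{Z\<in>\<G>. Z \<le> X}" Y] assms by auto
  then have "m \<in> maximal_below \<G> X"
    unfolding maximal_below_def using less_le by auto
  then show ?thesis using m by auto
qed

lemma key:
  assumes bs: "building_set \<G>" and GG: "G \<in> \<G>" and HG: "H \<subseteq> \<G>"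
    and meet: "\<forall>h\<in>H. \<exists>b. is_atom b \<and> b \<le> h \<and> b \<le> G"
  shows "Sup (insert G H) \<in> (\<G>::'a::{finite,complete_lattice} set)"
proof -
  define X where "X = Sup (insert G H)"
  have sub: "\<G> \<subseteq> UNIV - {bot}" using bs by (simp add: building_set_def)
  have GX: "G \<le> X" unfolding X_def by (simp add: Sup_upper)
  have "G \<noteq> bot" using GG sub by auto
  then have Xnb: "X \<noteq> bot" using GX bot_unique by blast
  define M where "M = maximal_below \<G> X"
  define P where "P = PiE M (\<lambda>G. {bot..G})"
  from bs Xnb obtain \<phi> where bij: "bij_betw \<phi> P {bot..X}"
    and ord: "\<forall>f\<in>P. \<forall>g\<in>P. (\<forall>G\<in>M. f G \<le> g G) \<longleftrightarrow> \<phi> f \<le> \<phi> g"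
    and un: "\<forall>G\<in>M. \<phi> (\<lambda>H\<in>M. if H = G then G else bot) = G"
    unfolding building_set_def Let_def M_def P_def by blast
  have disj: "z = bot" if m1: "m1 \<in> M" and m2: "m2 \<in> M" and ne: "m1 \<noteq> m2"
    and z1: "z \<le> m1" and z2: "z \<le> m2" for m1 m2 z
  proof -
    have m1X: "m1 \<le> X" using m1 by (simp add: M_def maximal_below_def)
    have "z \<in> {bot..X}" using z1 m1X by auto
    then have "z \<in> \<phi> ` P" using bij by (simp add: bij_betw_def)
    then obtain g where g: "g \<in> P" "z = \<phi> g" by blast
    define e1 where "e1 = (\<lambda>H\<in>M. if H = m1 then m1 else bot)"
    define e2 where "e2 = (\<lambda>H\<in>M. if H = m2 then m2 else bot)"
    have e1P: "e1 \<in> P" unfolding e1_def P_def by auto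
    have e2P: "e2 \<in> P" unfolding e2_def P_def by auto
    have "\<phi> e1 = m1" using un m1 by (simp add: e1_def)
    then have "\<forall>G\<in>M. g G \<le> e1 G" using ord g e1P z1 by auto
    moreover have "\<phi> e2 = m2" using un m2 by (simp add: e2_def)
    then have "\<forall>G\<in>M. g G \<le> e2 G" using ord g e2P z2 by auto
    ultimately have gb: "\<forall>G\<in>M. g G = bot"
    proof (intro ballI)
      fix G assume GM: "G \<in> M" and l1: "\<forall>G\<in>M. g G \<le> e1 G" and l2: "\<forall>G\<in>M. g G \<le> e2 G"
      show "g G = bot"
      proof (cases "G = m1")
        case True
        then have "e2 G = bot" using ne GM by (simp add: e2_def)
        then show ?thesis using l2 GM by (metis bot_unique)
      next
        case False
        then have "e1 G = bot" using GM by (simp add: e1_def)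
        then show ?thesis using l1 GM by (metis bot_unique)
      qed
    qed
    have "bot \<in> {bot..X}" by simp
    then have "bot \<in> \<phi> ` P" using bij by (simp add: bij_betw_def)
    then obtain f0 where f0: "f0 \<in> P" "bot = \<phi> f0" by blast
    have "\<forall>G\<in>M. g G \<le> f0 G" using gb by simp
    then have "\<phi> g \<le> \<phi> f0" using ord g f0 by blast
    then show ?thesis using g f0 bot_unique by metis
  qed
  obtain mG where mG: "mG \<in> M" "G \<le> mG" using below_maximal[OF GG GX] M_def by auto
  have "h \<le> mG" if h: "h \<in> H" for h
  proof -
    have "h \<le> X" unfolding X_def by (rule Sup_upper) (simp add: h)
    then obtain mh where mh: "mh \<in> M" "h \<le> mh" using below_maximal[of h \<G> X] h HG M_def by auto
    obtain b where b: "is_atom b" "b \<le> h" "b \<le> G" using meet h by blast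
    have "mh = mG"
    proof (rule ccontr)
      assume "mh \<noteq> mG"
      moreover have "b \<le> mh" using b(2) mh(2) by (rule order_trans)
      moreover have "b \<le> mG" using b(3) mG(2) by (rule order_trans)
      ultimately have "b = bot" using disj[OF mh(1) mG(1)] by blast
      then show False using b atom_nonbot by blast
    qed
    then show ?thesis using mh by simp
  qed
  then have "X \<le> mG" unfolding X_def using mG by (simp add: Sup_le_iff)
  moreover have "mG \<le> X" "mG \<in> \<G>" using mG(1) by (auto simp: M_def maximal_below_def)
  ultimately show ?thesis unfolding X_def[symmetric] by (metis order_antisym)
qed


lemma cover:
  assumes at: "atomic_lattice TYPE('a::{finite,complete_lattice})"
    and bs: "building_set \<G>" and nS: "nested \<G> S" and GG: "(G::'a) \<in> \<G>"
    and WS: "W \<subseteq> S" and nle: "\<forall>w\<in>W. \<not> G \<le> w"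
    and cov: "\<forall>a. is_atom a \<and> a \<le> G \<longrightarrow> (\<exists>w\<in>W. a \<le> w)"
  shows False
proof -
  have SG: "S \<subseteq> \<G>" using nS by (simp add: nested_def)
  have sub: "\<G> \<subseteq> UNIV - {bot}" using bs by (simp add: building_set_def)
  define W' where "W' = {w\<in>W. \<exists>b. is_atom b \<and> b \<le> w \<and> b \<le> G}"
  define H where "H = {w\<in>W'. \<forall>w'\<in>W'. w \<le> w' \<longrightarrow> w = w'}"
  have Hmax: "\<exists>h\<in>H. w \<le> h" if "w \<in> W'" for w
    using finite_has_maximal2[of W' w] that by (auto simp: H_def)
  have HW: "H \<subseteq> W'" by (auto simp: H_def)
  have HS: "H \<subseteq> S" using HW WS by (auto simp: W'_def)
  have aW': "\<exists>h\<in>H. a \<le> h" if a: "is_atom a" "a \<le> G" for a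
  proof -
    obtain w where w: "w \<in> W" "a \<le> w" using cov a by blast
    then have "w \<in> W'" using a by (auto simp: W'_def)
    then obtain h where "h \<in> H" "w \<le> h" using Hmax by blast
    then show ?thesis using w order_trans by blast
  qed
  have GsupH: "G \<le> Sup H"
  proof -
    have "Sup (floor_atoms G) \<le> Sup H"
    proof (rule Sup_least)
      fix a assume "a \<in> floor_atoms G"
      then obtain h where "h \<in> H" "a \<le> h" using aW' by (auto simp: floor_atoms_def)
      then show "a \<le> Sup H" using Sup_upper order_trans by blast
    qed
    then show ?thesis using atomic_eq[OF at, of G] by simp
  qed
  have Gnb: "G \<noteq> bot" using GG sub by auto
  obtain a0 where a0: "is_atom a0" "a0 \<le> G" using exists_atom[OF at Gnb] by blast
  obtain h0 where h0: "h0 \<in> H" using aW'[OF a0] by blast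
  show False
  proof (cases "2 \<le> card H")
    case True
    have anti: "\<forall>x\<in>H. \<forall>y\<in>H. x \<noteq> y \<longrightarrow> \<not> x \<le> y"
      using HW by (auto simp: H_def)
    have "Sup H \<notin> \<G>" using nS HS True anti unfolding nested_def by blast
    moreover have "Sup (insert G H) \<in> \<G>"
    proof (rule key[OF bs GG])
      show "H \<subseteq> \<G>" using HS SG by blast
      show "\<forall>h\<in>H. \<exists>b. is_atom b \<and> b \<le> h \<and> b \<le> G" using HW by (auto simp: W'_def)
    qed
    moreover have "Sup (insert G H) = Sup H" using GsupH by (simp add: sup_absorb2)
    ultimately show False by simp
  next
    case False
    have "card H \<noteq> 0" using h0 by auto
    then have "card H = 1" using False by linarith
    then obtain h where "H = {h}" using card_1_singletonE by blast
    then have "G \<le> h" using GsupH by simp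
    moreover have "h \<in> W" using \<open>H = {h}\<close> HW by (auto simp: W'_def)
    ultimately show False using nle by blast
  qed
qed

lemma blown_step:
  assumes "k < length Gs"
  shows "blown_up_fan (take (Suc k) Gs) = stellar (blown_up_fan (take k Gs)) (vvec ` floor_atoms (Gs!k))"
  using assms by (simp add: blown_up_fan_def take_Suc_conv_app_nth)

definition piS :: "'a::{finite,complete_lattice} list \<Rightarrow> nat \<Rightarrow> 'a set \<Rightarrow> ('a \<Rightarrow> real) set" where
  "piS Gs k S = vvec ` ((S \<inter> set (take k Gs)) \<union> {a. is_atom a \<and> (\<exists>G\<in>S - set (take k Gs). a \<le> G)})"

lemma upper:
  assumes at: "atomic_lattice TYPE('a::{finite,complete_lattice})"
    and bs: "building_set \<G>" and sG: "set Gs = (\<G>::'a set)"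
  shows "k \<le> length Gs \<Longrightarrow> \<forall>R\<in>blown_up_fan (take k Gs). R \<subseteq> vvec ` \<G>"
proof (induction k)
  case 0
  then show ?case using atoms_in_G[OF bs]
    by (auto simp: blown_up_fan_def standard_fan_def)
next
  case (Suc k)
  then have k: "k < length Gs" by simp
  have GG: "Gs ! k \<in> \<G>" using k sG nth_mem by blast
  have IH: "\<forall>R\<in>blown_up_fan (take k Gs). R \<subseteq> vvec ` \<G>" using Suc by simp
  show ?case
  proof
    fix R assume "R \<in> blown_up_fan (take (Suc k) Gs)"
    then have "R \<in> stellar (blown_up_fan (take k Gs)) (vvec ` floor_atoms (Gs!k))"
      using blown_step[OF k] by simp
    then consider "R \<in> blown_up_fan (take k Gs)"
      | \<tau> where "R = insert (\<lambda>i. \<Sum>x\<in>vvec ` floor_atoms (Gs!k). x i) \<tau>"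
          "\<tau> \<union> vvec ` floor_atoms (Gs!k) \<in> blown_up_fan (take k Gs)"
      unfolding stellar_def by blast
    then show "R \<subseteq> vvec ` \<G>"
    proof cases
      case 1 then show ?thesis using IH by blast
    next
      case 2
      then have "\<tau> \<subseteq> vvec ` \<G>" using IH by blast
      then show ?thesis using 2(1) sum_vvec[OF at] GG by auto
    qed
  qed
qed


lemma lower:
  assumes at: "atomic_lattice TYPE('a::{finite,complete_lattice})"
    and bs: "building_set \<G>" and dG: "distinct Gs" and sG: "set Gs = (\<G>::'a set)"
    and ordG: "\<forall>i<length Gs. \<forall>j<length Gs. Gs ! i \<le> Gs ! j \<longrightarrow> j \<le> i"
    and nS: "nested \<G> S"
  shows "k \<le> length Gs \<Longrightarrow> piS Gs k S \<in> blown_up_fan (take k Gs)"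
proof (induction k)
  case 0
  then show ?case
    by (auto simp: blown_up_fan_def standard_fan_def piS_def)
next
  case (Suc k)
  then have k: "k < length Gs" by simp
  have IH: "piS Gs k S \<in> blown_up_fan (take k Gs)" using Suc by simp
  define G where "G = Gs ! k"
  define D where "D = set (take k Gs)"
  define \<sigma> where "\<sigma> = vvec ` floor_atoms G"
  have SG: "S \<subseteq> \<G>" using nS by (simp add: nested_def)
  have sub: "\<G> \<subseteq> UNIV - {bot}" using bs by (simp add: building_set_def)
  have GG: "G \<in> \<G>" using k sG nth_mem G_def by blast
  have Gnb: "G \<noteq> bot" using GG sub by auto
  have D': "set (take (Suc k) Gs) = insert G D"
    using k by (simp add: take_Suc_conv_app_nth G_def D_def)
  have GD: "G \<notin> D"
  proof
    assume "G \<in> D"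
    then obtain j where j: "j < length (take k Gs)" "take k Gs ! j = G"
      unfolding D_def by (auto simp: in_set_conv_nth)
    then have "Gs ! j = Gs ! k" "j < k" using k by (auto simp: G_def)
    then show False using dG k nth_eq_iff_index_eq by fastforce
  qed
  have ordD: "w \<in> D" if "w \<in> \<G>" "G \<le> w" "w \<noteq> G" for w
  proof -
    have "w \<in> set Gs" using that(1) sG by simp
    then obtain j where j: "j < length Gs" "Gs ! j = w" by (metis in_set_conv_nth)
    then have "j \<le> k" using ordG k that(2) G_def by blast
    moreover have "j \<noteq> k" using j that(3) G_def by blast
    ultimately have "j < k" by simp
    then show ?thesis using j k unfolding D_def by (auto simp: in_set_conv_nth intro!: exI[of _ j])
  qed
  have atomle: "G = w" if "is_atom w" "G \<le> w" for w
    using that Gnb by (auto simp: is_atom_def)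
  have step: "blown_up_fan (take (Suc k) Gs) = stellar (blown_up_fan (take k Gs)) \<sigma>"
    using blown_step[OF k] by (simp add: G_def \<sigma>_def)
  show ?case
  proof (cases "G \<in> S")
    case False
    have i1: "S \<inter> insert G D = S \<inter> D" using False by auto
    have i2: "S - insert G D = S - D" using False by auto
    have eq: "piS Gs (Suc k) S = piS Gs k S"
      unfolding piS_def D' D_def[symmetric] i1 i2 by (rule refl)
    have "\<not> \<sigma> \<subseteq> piS Gs k S"
    proof
      assume ss: "\<sigma> \<subseteq> piS Gs k S"
      show False
      proof (rule cover[OF at bs nS GG])
        show "(S - D) \<union> {a\<in>S \<inter> D. is_atom a} \<subseteq> S" by blast
        show "\<forall>w\<in>(S - D) \<union> {a\<in>S \<inter> D. is_atom a}. \<not> G \<le> w"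
        proof (intro ballI notI)
          fix w assume w: "w \<in> (S - D) \<union> {a\<in>S \<inter> D. is_atom a}" "G \<le> w"
          have wS: "w \<in> S" using w(1) by blast
          then have wne: "w \<noteq> G" using False by auto
          show False
          proof (cases "w \<in> D")
            case True
            then have "is_atom w" using w(1) by blast
            have "G = w" using atomle[OF \<open>is_atom w\<close> w(2)] .
            then show False using wne by simp
          next
            case False
            have "w \<in> \<G>" using wS SG by blast
            then have "w \<in> D" using ordD w(2) wne by blast
            then show False using False by simp
          qed
        qed
        show "\<forall>a. is_atom a \<and> a \<le> G \<longrightarrow> (\<exists>w\<in>(S - D) \<union> {a\<in>S \<inter> D. is_atom a}. a \<le> w)"
        proof (intro allI impI)
          fix a assume a: "is_atom a \<and> a \<le> G"
          then have "vvec a \<in> piS Gs k S" using ss by (auto simp: \<sigma>_def floor_atoms_def)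
          then obtain x where x: "x \<in> (S \<inter> D) \<union> {a. is_atom a \<and> (\<exists>G\<in>S - D. a \<le> G)}" "vvec a = vvec x"
            unfolding piS_def D_def by blast
          then have "a = x" using vvec_inj[OF at] by blast
          then show "\<exists>w\<in>(S - D) \<union> {a\<in>S \<inter> D. is_atom a}. a \<le> w" using x a by auto
        qed
      qed
    qed
    then have "piS Gs k S \<in> stellar (blown_up_fan (take k Gs)) \<sigma>"
      unfolding stellar_def using IH by (intro UnI1) simp
    then show ?thesis using eq step by simp
  next
    case True
    define A' where "A' = {a. is_atom a \<and> (\<exists>G'\<in>S - insert G D. a \<le> G')}"
    define \<tau> where "\<tau> = vvec ` ((S \<inter> D) \<union> A')"
    have e1: "piS Gs (Suc k) S = insert (\<lambda>i. \<Sum>x\<in>\<sigma>. x i) \<tau>"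
    proof -
      have "piS Gs (Suc k) S = vvec ` (insert G ((S \<inter> D) \<union> A'))"
        unfolding piS_def D' A'_def using True by (intro arg_cong[where f="image vvec"]) blast
      then show ?thesis using sum_vvec[OF at, of G] by (simp add: \<tau>_def \<sigma>_def)
    qed
    have e2: "\<tau> \<union> \<sigma> = piS Gs k S"
    proof -
      have "(S \<inter> D) \<union> A' \<union> floor_atoms G = (S \<inter> D) \<union> {a. is_atom a \<and> (\<exists>G\<in>S - D. a \<le> G)}"
        unfolding A'_def floor_atoms_def using True GD by auto
      then show ?thesis unfolding \<tau>_def \<sigma>_def piS_def D_def[symmetric] by (metis image_Un)
    qed
    have "\<not> \<sigma> \<subseteq> \<tau>"
    proof
      assume ss: "\<sigma> \<subseteq> \<tau>"
      show False
      proof (rule cover[OF at bs nS GG])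
        show "(S - insert G D) \<union> {a\<in>S \<inter> D. is_atom a} \<subseteq> S" by blast
        show "\<forall>w\<in>(S - insert G D) \<union> {a\<in>S \<inter> D. is_atom a}. \<not> G \<le> w"
        proof (intro ballI notI)
          fix w assume w: "w \<in> (S - insert G D) \<union> {a\<in>S \<inter> D. is_atom a}" "G \<le> w"
          have wS: "w \<in> S" using w(1) by blast
          show False
          proof (cases "w \<in> D")
            case True
            then have "is_atom w" using w(1) by blast
            have "G = w" using atomle[OF \<open>is_atom w\<close> w(2)] .
            then show False using GD True by simp
          next
            case False
            then have "w \<noteq> G" using w(1) by blast
            have "w \<in> \<G>" using wS SG by blast
            then have "w \<in> D" using ordD w(2) \<open>w \<noteq> G\<close> by blast
            then show False using False by simp
          qed
        qed
        show "\<forall>a. is_atom a \<and> a \<le> G \<longrightarrow> (\<exists>w\<in>(S - insert G D) \<union> {a\<in>S \<inter> D. is_atom a}. a \<le> w)"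
        proof (intro allI impI)
          fix a assume a: "is_atom a \<and> a \<le> G"
          then have "vvec a \<in> \<tau>" using ss by (auto simp: \<sigma>_def floor_atoms_def)
          then obtain x where x: "x \<in> (S \<inter> D) \<union> A'" "vvec a = vvec x"
            unfolding \<tau>_def by blast
          then have "a = x" using vvec_inj[OF at] by blast
          then show "\<exists>w\<in>(S - insert G D) \<union> {a\<in>S \<inter> D. is_atom a}. a \<le> w"
            using x a unfolding A'_def by auto
        qed
      qed
    qed
    then have "insert (\<lambda>i. \<Sum>x\<in>\<sigma>. x i) \<tau> \<in> stellar (blown_up_fan (take k Gs)) \<sigma>"
      unfolding stellar_def using IH e2 by (intro UnI2 CollectI exI[of _ \<tau>]) simp
    then show ?thesis using e1 step by simp
  qed
qed


theorem corollary6p2: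
  fixes \<G> :: "'a::{finite,complete_lattice} set" and Gs :: "'a list"
  assumes "atomic_lattice TYPE('a)"
    and "building_set \<G>"
    and "distinct Gs" and "set Gs = \<G>"
    and "\<forall>i<length Gs. \<forall>j<length Gs. Gs ! i \<le> Gs ! j \<longrightarrow> j \<le> i"
  shows "cone_span ` pruned_fan \<G> Gs = nested_fan \<G>"
proof
  have inj: "inj (vvec :: 'a \<Rightarrow> 'a \<Rightarrow> real)" using vvec_inj[OF assms(1)] by (rule injI)
  show "cone_span ` pruned_fan \<G> Gs \<subseteq> nested_fan \<G>"
  proof
    fix C assume "C \<in> cone_span ` pruned_fan \<G> Gs"
    then obtain R where R: "R \<in> blown_up_fan Gs" "nested \<G> {G \<in> \<G>. vvec G \<in> R}" "C = cone_span R"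
      by (auto simp: pruned_fan_def)
    have "R \<subseteq> vvec ` \<G>" using upper[OF assms(1,2,4), of "length Gs"] R(1) by simp
    then have "R = vvec ` {G \<in> \<G>. vvec G \<in> R}" by blast
    then have "C = V_cone {G \<in> \<G>. vvec G \<in> R}" using R(3) by (simp add: V_cone_def)
    then show "C \<in> nested_fan \<G>" using R(2) by (auto simp: nested_fan_def)
  qed
  show "nested_fan \<G> \<subseteq> cone_span ` pruned_fan \<G> Gs"
  proof
    fix C assume "C \<in> nested_fan \<G>"
    then obtain S where S: "nested \<G> S" "C = V_cone S" by (auto simp: nested_fan_def)
    have SG: "S \<subseteq> \<G>" using S(1) by (simp add: nested_def)
    have "piS Gs (length Gs) S \<in> blown_up_fan (take (length Gs) Gs)"
      using lower[OF assms S(1), where k="length Gs"] by simp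
    moreover have "piS Gs (length Gs) S = vvec ` S"
      unfolding piS_def using SG assms(4) by (intro arg_cong[where f="image vvec"]) auto
    ultimately have mem: "vvec ` S \<in> blown_up_fan Gs" by simp
    have "{G \<in> \<G>. vvec G \<in> vvec ` S} = S" using SG inj by (auto simp: inj_image_mem_iff)
    then have "vvec ` S \<in> pruned_fan \<G> Gs" using mem S(1) by (simp add: pruned_fan_def)
    then show "C \<in> cone_span ` pruned_fan \<G> Gs" using S(2) by (simp add: V_cone_def)
  qed
qed

end
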